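(* Let $\mathcal{C}$ be a bicomplete category with splitting coproducts and disjoint coproducts. Then every cofibration $c:A\to B$ of the generalized core model structure on $\mathcal{C}$ is isomorphic (as an object under $A$) to a canonical coproduct inclusion $i_1:A\to A\sqcup X$ for some object $X$; i.e. there is an isomorphism $\phi:B\to A\sqcup X$ with $\phi c=i_1$.
   Context: Bicomplete means having all finite limits and finite colimits. The generalized core model structure on $\mathcal{C}$ has weak equivalences the morphisms $f:A\to B$ for which some morphism $B\to A$ exists, cofibrations the morphisms having the left lifting property against all retractions (morphisms $r$ with $rs=1$ for some $s$), and fibrations the morphisms having the right lifting property against all cofibrations that are weak equivalences. Splitting coproducts: every $f:X\to A\sqcup B$ is isomorphic to $f_L\sqcup f_R$ for some $f_L:X_L\to A$, $f_R:X_R\to B$ with $X\cong X_L\sqcup X_R$. Disjoint coproducts: coproduct injections are monic, the pullback of $i_1:A\to A\sqcup B$ and $i_2:B\to A\sqcup B$ is the initial object, and the pullback of $i_1$ along itself (resp. $i_2$ along itself) is $A$ (resp. $B$) with identity maps. *)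

theory Defs
  imports Main
begin

record ('o, 'm) cat =
  Obj :: "'o set"
  Arr :: "'m set"
  Dom :: "'m \<Rightarrow> 'o"
  Cod :: "'m \<Rightarrow> 'o"
  Idm :: "'o \<Rightarrow> 'm"
  Cmp :: "'m \<Rightarrow> 'm \<Rightarrow> 'm"  (* Cmp C g f = g \<circ> f *)

definition hom :: "('o, 'm) cat \<Rightarrow> 'o \<Rightarrow> 'o \<Rightarrow> 'm set" where
  "hom C a b = {f \<in> Arr C. Dom C f = a \<and> Cod C f = b}"

definition is_category :: "('o, 'm) cat \<Rightarrow> bool" where
  "is_category C \<longleftrightarrow>
     (\<forall>f\<in>Arr C. Dom C f \<in> Obj C \<and> Cod C f \<in> Obj C) \<and>
     (\<forall>a\<in>Obj C. Idm C a \<in> hom C a a) \<and>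
     (\<forall>f\<in>Arr C. \<forall>g\<in>Arr C. Cod C f = Dom C g \<longrightarrow>
        Cmp C g f \<in> hom C (Dom C f) (Cod C g)) \<and>
     (\<forall>f\<in>Arr C. Cmp C f (Idm C (Dom C f)) = f \<and> Cmp C (Idm C (Cod C f)) f = f) \<and>
     (\<forall>f\<in>Arr C. \<forall>g\<in>Arr C. \<forall>h\<in>Arr C. Cod C f = Dom C g \<longrightarrow> Cod C g = Dom C h \<longrightarrow>
        Cmp C h (Cmp C g f) = Cmp C (Cmp C h g) f)"

definition iso :: "('o, 'm) cat \<Rightarrow> 'm \<Rightarrow> bool" where
  "iso C f \<longleftrightarrow> f \<in> Arr C \<and>
     (\<exists>g\<in>hom C (Cod C f) (Dom C f). Cmp C g f = Idm C (Dom C f) \<and> Cmp C f g = Idm C (Cod C f))"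

definition monic :: "('o, 'm) cat \<Rightarrow> 'm \<Rightarrow> bool" where
  "monic C m \<longleftrightarrow> m \<in> Arr C \<and>
     (\<forall>x\<in>Arr C. \<forall>y\<in>Arr C. Cod C x = Dom C m \<longrightarrow> Cod C y = Dom C m \<longrightarrow> Dom C x = Dom C y \<longrightarrow>
        Cmp C m x = Cmp C m y \<longrightarrow> x = y)"

definition initial :: "('o, 'm) cat \<Rightarrow> 'o \<Rightarrow> bool" where
  "initial C I \<longleftrightarrow> I \<in> Obj C \<and> (\<forall>Y\<in>Obj C. \<exists>!h. h \<in> hom C I Y)"

text \<open>A finite diagram shape is a finite category whose objects and arrows are
  encoded as natural numbers; a diagram is a functor (on objects and on arrows).\<close>

definition finite_category :: "(nat, nat) cat \<Rightarrow> bool" where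
  "finite_category J \<longleftrightarrow> is_category J \<and> finite (Obj J) \<and> finite (Arr J)"

definition is_diagram ::
  "(nat, nat) cat \<Rightarrow> ('o, 'm) cat \<Rightarrow> (nat \<Rightarrow> 'o) \<Rightarrow> (nat \<Rightarrow> 'm) \<Rightarrow> bool" where
  "is_diagram J C Do Da \<longleftrightarrow>
     (\<forall>j\<in>Obj J. Do j \<in> Obj C) \<and>
     (\<forall>u\<in>Arr J. Da u \<in> hom C (Do (Dom J u)) (Do (Cod J u))) \<and>
     (\<forall>j\<in>Obj J. Da (Idm J j) = Idm C (Do j)) \<and>
     (\<forall>u\<in>Arr J. \<forall>v\<in>Arr J. Cod J u = Dom J v \<longrightarrow> Da (Cmp J v u) = Cmp C (Da v) (Da u))"

definition is_cone ::
  "(nat, nat) cat \<Rightarrow> ('o, 'm) cat \<Rightarrow> (nat \<Rightarrow> 'o) \<Rightarrow> (nat \<Rightarrow> 'm) \<Rightarrow> 'o \<Rightarrow> (nat \<Rightarrow> 'm) \<Rightarrow> bool" where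
  "is_cone J C Do Da L l \<longleftrightarrow> L \<in> Obj C \<and>
     (\<forall>j\<in>Obj J. l j \<in> hom C L (Do j)) \<and>
     (\<forall>u\<in>Arr J. Cmp C (Da u) (l (Dom J u)) = l (Cod J u))"

definition is_limit ::
  "(nat, nat) cat \<Rightarrow> ('o, 'm) cat \<Rightarrow> (nat \<Rightarrow> 'o) \<Rightarrow> (nat \<Rightarrow> 'm) \<Rightarrow> 'o \<Rightarrow> (nat \<Rightarrow> 'm) \<Rightarrow> bool" where
  "is_limit J C Do Da L l \<longleftrightarrow> is_cone J C Do Da L l \<and>
     (\<forall>L' l'. is_cone J C Do Da L' l' \<longrightarrow>
        (\<exists>!h. h \<in> hom C L' L \<and> (\<forall>j\<in>Obj J. Cmp C (l j) h = l' j)))"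

definition is_cocone ::
  "(nat, nat) cat \<Rightarrow> ('o, 'm) cat \<Rightarrow> (nat \<Rightarrow> 'o) \<Rightarrow> (nat \<Rightarrow> 'm) \<Rightarrow> 'o \<Rightarrow> (nat \<Rightarrow> 'm) \<Rightarrow> bool" where
  "is_cocone J C Do Da L l \<longleftrightarrow> L \<in> Obj C \<and>
     (\<forall>j\<in>Obj J. l j \<in> hom C (Do j) L) \<and>
     (\<forall>u\<in>Arr J. Cmp C (l (Cod J u)) (Da u) = l (Dom J u))"

definition is_colimit ::
  "(nat, nat) cat \<Rightarrow> ('o, 'm) cat \<Rightarrow> (nat \<Rightarrow> 'o) \<Rightarrow> (nat \<Rightarrow> 'm) \<Rightarrow> 'o \<Rightarrow> (nat \<Rightarrow> 'm) \<Rightarrow> bool" where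
  "is_colimit J C Do Da L l \<longleftrightarrow> is_cocone J C Do Da L l \<and>
     (\<forall>L' l'. is_cocone J C Do Da L' l' \<longrightarrow>
        (\<exists>!h. h \<in> hom C L L' \<and> (\<forall>j\<in>Obj J. Cmp C h (l j) = l' j)))"

definition bicomplete :: "('o, 'm) cat \<Rightarrow> bool" where
  "bicomplete C \<longleftrightarrow>
     (\<forall>J Do Da. finite_category J \<and> is_diagram J C Do Da \<longrightarrow> (\<exists>L l. is_limit J C Do Da L l)) \<and>
     (\<forall>J Do Da. finite_category J \<and> is_diagram J C Do Da \<longrightarrow> (\<exists>L l. is_colimit J C Do Da L l))"

definition is_coproduct :: "('o, 'm) cat \<Rightarrow> 'o \<Rightarrow> 'o \<Rightarrow> 'o \<Rightarrow> 'm \<Rightarrow> 'm \<Rightarrow> bool" where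
  "is_coproduct C A B S i1 i2 \<longleftrightarrow> i1 \<in> hom C A S \<and> i2 \<in> hom C B S \<and>
     (\<forall>Y f g. f \<in> hom C A Y \<longrightarrow> g \<in> hom C B Y \<longrightarrow>
        (\<exists>!h. h \<in> hom C S Y \<and> Cmp C h i1 = f \<and> Cmp C h i2 = g))"

definition is_pullback :: "('o, 'm) cat \<Rightarrow> 'm \<Rightarrow> 'm \<Rightarrow> 'o \<Rightarrow> 'm \<Rightarrow> 'm \<Rightarrow> bool" where
  "is_pullback C f g P p q \<longleftrightarrow> f \<in> Arr C \<and> g \<in> Arr C \<and> Cod C f = Cod C g \<and>
     p \<in> hom C P (Dom C f) \<and> q \<in> hom C P (Dom C g) \<and> Cmp C f p = Cmp C g q \<and>
     (\<forall>Q p' q'. p' \<in> hom C Q (Dom C f) \<longrightarrow> q' \<in> hom C Q (Dom C g) \<longrightarrow> Cmp C f p' = Cmp C g q' \<longrightarrow>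
        (\<exists>!h. h \<in> hom C Q P \<and> Cmp C p h = p' \<and> Cmp C q h = q'))"

text \<open>Splitting coproducts: every f : X \<rightarrow> A \<squnion> B is isomorphic (over A \<squnion> B) to
  f_L \<squnion> f_R, i.e. there is a coproduct X_L \<squnion> X_R and an isomorphism
  \<theta> : X_L \<squnion> X_R \<rightarrow> X with f \<circ> \<theta> = f_L \<squnion> f_R.\<close>

definition splitting_coproducts :: "('o, 'm) cat \<Rightarrow> bool" where
  "splitting_coproducts C \<longleftrightarrow>
     (\<forall>A B S i1 i2 X f. is_coproduct C A B S i1 i2 \<longrightarrow> f \<in> hom C X S \<longrightarrow>
        (\<exists>XL XR fL fR Y j1 j2 \<theta>.
           fL \<in> hom C XL A \<and> fR \<in> hom C XR B \<and>
           is_coproduct C XL XR Y j1 j2 \<and> \<theta> \<in> hom C Y X \<and> iso C \<theta> \<and>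
           Cmp C (Cmp C f \<theta>) j1 = Cmp C i1 fL \<and>
           Cmp C (Cmp C f \<theta>) j2 = Cmp C i2 fR))"

definition disjoint_coproducts :: "('o, 'm) cat \<Rightarrow> bool" where
  "disjoint_coproducts C \<longleftrightarrow>
     (\<forall>A B S i1 i2. is_coproduct C A B S i1 i2 \<longrightarrow>
        monic C i1 \<and> monic C i2 \<and>
        (\<forall>P p q. is_pullback C i1 i2 P p q \<longrightarrow> initial C P) \<and>
        is_pullback C i1 i1 A (Idm C A) (Idm C A) \<and>
        is_pullback C i2 i2 B (Idm C B) (Idm C B))"

definition retraction :: "('o, 'm) cat \<Rightarrow> 'm \<Rightarrow> bool" where
  "retraction C r \<longleftrightarrow> r \<in> Arr C \<and> (\<exists>s\<in>hom C (Cod C r) (Dom C r). Cmp C r s = Idm C (Cod C r))"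

definition llp :: "('o, 'm) cat \<Rightarrow> 'm \<Rightarrow> 'm \<Rightarrow> bool" where
  "llp C i p \<longleftrightarrow> i \<in> Arr C \<and> p \<in> Arr C \<and>
     (\<forall>u v. u \<in> hom C (Dom C i) (Dom C p) \<longrightarrow> v \<in> hom C (Cod C i) (Cod C p) \<longrightarrow>
        Cmp C p u = Cmp C v i \<longrightarrow>
        (\<exists>h\<in>hom C (Cod C i) (Dom C p). Cmp C h i = u \<and> Cmp C p h = v))"

definition core_weq :: "('o, 'm) cat \<Rightarrow> 'm \<Rightarrow> bool" where
  "core_weq C f \<longleftrightarrow> f \<in> Arr C \<and> hom C (Cod C f) (Dom C f) \<noteq> {}"

definition core_cofibration :: "('o, 'm) cat \<Rightarrow> 'm \<Rightarrow> bool" where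
  "core_cofibration C c \<longleftrightarrow> c \<in> Arr C \<and> (\<forall>r. retraction C r \<longrightarrow> llp C c r)"

definition core_fibration :: "('o, 'm) cat \<Rightarrow> 'm \<Rightarrow> bool" where
  "core_fibration C f \<longleftrightarrow> f \<in> Arr C \<and>
     (\<forall>i. core_cofibration C i \<and> core_weq C i \<longrightarrow> llp C i f)"

end

theory Submission imports Defs begin

lemma homI: "f \<in> Arr C \<Longrightarrow> Dom C f = a \<Longrightarrow> Cod C f = b \<Longrightarrow> f \<in> hom C a b"
  by (simp add: hom_def)
lemma homD: "f \<in> hom C a b \<Longrightarrow> f \<in> Arr C \<and> Dom C f = a \<and> Cod C f = b"
  by (simp add: hom_def)

lemma hom_obj: "is_category C \<Longrightarrow> f \<in> hom C a b \<Longrightarrow> a \<in> Obj C \<and> b \<in> Obj C"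
  unfolding is_category_def hom_def by auto

lemma comp: "is_category C \<Longrightarrow> f \<in> hom C a b \<Longrightarrow> g \<in> hom C b c \<Longrightarrow> Cmp C g f \<in> hom C a c"
  unfolding is_category_def hom_def by auto

lemma idm: "is_category C \<Longrightarrow> a \<in> Obj C \<Longrightarrow> Idm C a \<in> hom C a a"
  unfolding is_category_def by auto

lemma idl: "is_category C \<Longrightarrow> f \<in> hom C a b \<Longrightarrow> Cmp C (Idm C b) f = f"
  unfolding is_category_def hom_def by auto

lemma idr: "is_category C \<Longrightarrow> f \<in> hom C a b \<Longrightarrow> Cmp C f (Idm C a) = f"
  unfolding is_category_def hom_def by auto

lemma assoc: "is_category C \<Longrightarrow> f \<in> hom C a b \<Longrightarrow> g \<in> hom C b c \<Longrightarrow> h \<in> hom C c d \<Longrightarrow>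
   Cmp C h (Cmp C g f) = Cmp C (Cmp C h g) f"
  unfolding is_category_def hom_def by auto

lemma idid: "is_category C \<Longrightarrow> a \<in> Obj C \<Longrightarrow> Cmp C (Idm C a) (Idm C a) = Idm C a"
  using idl[of C "Idm C a" a a] idm[of C a] by blast

lemma monicD: "monic C m \<Longrightarrow> m \<in> hom C a b \<Longrightarrow> x \<in> hom C z a \<Longrightarrow> y \<in> hom C z a \<Longrightarrow>
   Cmp C m x = Cmp C m y \<Longrightarrow> x = y"
  unfolding monic_def hom_def by auto

lemma initial_uniq: "is_category C \<Longrightarrow> initial C P \<Longrightarrow> f \<in> hom C P Y \<Longrightarrow> g \<in> hom C P Y \<Longrightarrow> f = g"
proof -
  assume C: "is_category C" and I: "initial C P" and f: "f \<in> hom C P Y" and g: "g \<in> hom C P Y"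
  have "Y \<in> Obj C" using hom_obj[OF C f] by simp
  then have "\<exists>!h. h \<in> hom C P Y" using I unfolding initial_def by blast
  then show "f = g" using f g by blast
qed

lemma initial_ex: "is_category C \<Longrightarrow> initial C P \<Longrightarrow> Y \<in> Obj C \<Longrightarrow> \<exists>h. h \<in> hom C P Y"
  unfolding initial_def by blast

lemma coprod_inj: "is_coproduct C A B S i1 i2 \<Longrightarrow> i1 \<in> hom C A S \<and> i2 \<in> hom C B S"
  unfolding is_coproduct_def by auto

lemma coprod_ex: "is_coproduct C A B S i1 i2 \<Longrightarrow> f \<in> hom C A Y \<Longrightarrow> g \<in> hom C B Y \<Longrightarrow>
   \<exists>h. h \<in> hom C S Y \<and> Cmp C h i1 = f \<and> Cmp C h i2 = g"
  unfolding is_coproduct_def by blast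

lemma coprod_uniq: "is_category C \<Longrightarrow> is_coproduct C A B S i1 i2 \<Longrightarrow> h \<in> hom C S Y \<Longrightarrow> h' \<in> hom C S Y \<Longrightarrow>
   Cmp C h i1 = Cmp C h' i1 \<Longrightarrow> Cmp C h i2 = Cmp C h' i2 \<Longrightarrow> h = h'"
proof -
  assume a: "is_category C" "is_coproduct C A B S i1 i2" "h \<in> hom C S Y" "h' \<in> hom C S Y"
    "Cmp C h i1 = Cmp C h' i1" "Cmp C h i2 = Cmp C h' i2"
  have "Cmp C h i1 \<in> hom C A Y" "Cmp C h i2 \<in> hom C B Y"
    using a coprod_inj[OF a(2)] comp[OF a(1)] by blast+
  then have "\<exists>!k. k \<in> hom C S Y \<and> Cmp C k i1 = Cmp C h i1 \<and> Cmp C k i2 = Cmp C h i2"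
    using a(2) unfolding is_coproduct_def by blast
  then show "h = h'" using a by metis
qed

definition J2 :: "(nat, nat) cat" where
  "J2 = \<lparr>Obj = {0,1}, Arr = {0,1}, Dom = id, Cod = id, Idm = id, Cmp = (\<lambda>g f. f)\<rparr>"

lemma J2_fin: "finite_category J2"
  unfolding finite_category_def is_category_def J2_def hom_def by auto

lemma coproduct_exists:
  assumes C: "is_category C" and bc: "bicomplete C" and A: "A \<in> Obj C" and B: "B \<in> Obj C"
  shows "\<exists>S i1 i2. is_coproduct C A B S i1 i2"
proof -
  define Do where "Do = (\<lambda>j::nat. if j = 0 then A else B)"
  define Da where "Da = (\<lambda>j::nat. Idm C (Do j))"
  have D: "is_diagram J2 C Do Da"
    unfolding is_diagram_def J2_def Do_def Da_def using A B idm[OF C] by (auto simp: idid[OF C])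
  obtain L l where L: "is_colimit J2 C Do Da L l"
    using bc J2_fin D unfolding bicomplete_def by blast
  have l0: "l 0 \<in> hom C A L" and l1: "l 1 \<in> hom C B L"
    using L unfolding is_colimit_def is_cocone_def J2_def Do_def by auto
  have "is_coproduct C A B L (l 0) (l 1)"
    unfolding is_coproduct_def
  proof (intro conjI l0 l1 allI impI)
    fix Y f g assume f: "f \<in> hom C A Y" and g: "g \<in> hom C B Y"
    define l' where "l' = (\<lambda>j::nat. if j = 0 then f else g)"
    have "is_cocone J2 C Do Da Y l'"
      unfolding is_cocone_def J2_def Do_def Da_def l'_def using f g hom_obj[OF C] idr[OF C]
      by auto
    then obtain h where h: "h \<in> hom C L Y" "\<forall>j\<in>Obj J2. Cmp C h (l j) = l' j"
      and u: "\<And>h'. h' \<in> hom C L Y \<and> (\<forall>j\<in>Obj J2. Cmp C h' (l j) = l' j) \<Longrightarrow> h' = h"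
      using L unfolding is_colimit_def by metis
    show "\<exists>!h. h \<in> hom C L Y \<and> Cmp C h (l 0) = f \<and> Cmp C h (l 1) = g"
    proof (rule ex1I[of _ h])
      show "h \<in> hom C L Y \<and> Cmp C h (l 0) = f \<and> Cmp C h (l 1) = g"
        using h by (simp add: J2_def l'_def)
    next
      fix h' assume "h' \<in> hom C L Y \<and> Cmp C h' (l 0) = f \<and> Cmp C h' (l 1) = g"
      then show "h' = h" by (intro u) (auto simp: J2_def l'_def)
    qed
  qed
  then show ?thesis by blast
qed

definition JP :: "(nat, nat) cat" where
  "JP = \<lparr>Obj = {0,1,2}, Arr = {0,1,2,3,4},
         Dom = (\<lambda>u. if u = 3 then 0 else if u = 4 then 1 else u),
         Cod = (\<lambda>u. if u = 3 \<or> u = 4 then 2 else u), Idm = id,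
         Cmp = (\<lambda>g f. if f \<in> {0,1,2} then g else f)\<rparr>"

lemma JP_fin: "finite_category JP"
  unfolding finite_category_def is_category_def JP_def hom_def by simp

lemma pullback_exists:
  assumes C: "is_category C" and bc: "bicomplete C" and f: "f \<in> hom C A S" and g: "g \<in> hom C B S"
  shows "\<exists>P p q. is_pullback C f g P p q"
proof -
  have O: "A \<in> Obj C" "B \<in> Obj C" "S \<in> Obj C" using hom_obj[OF C] f g by auto
  define Do where "Do = (\<lambda>j::nat. if j = 0 then A else if j = 1 then B else S)"
  define Da where "Da = (\<lambda>j::nat. if j = 3 then f else if j = 4 then g else Idm C (Do j))"
  have D: "is_diagram JP C Do Da"
    unfolding is_diagram_def JP_def Do_def Da_def using O f g idm[OF C]
    by (auto simp: idl[OF C] idr[OF C] idid[OF C])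
  obtain L l where L: "is_limit JP C Do Da L l"
    using bc JP_fin D unfolding bicomplete_def by blast
  have l0: "l 0 \<in> hom C L A" and l1: "l 1 \<in> hom C L B" and l2: "l 2 \<in> hom C L S"
    and c1: "Cmp C f (l 0) = l 2" and c2: "Cmp C g (l 1) = l 2"
    using L unfolding is_limit_def is_cone_def JP_def Do_def Da_def by auto
  have "is_pullback C f g L (l 0) (l 1)"
    unfolding is_pullback_def
  proof (intro conjI allI impI)
    show "f \<in> Arr C" "g \<in> Arr C" "Cod C f = Cod C g" using f g by (auto simp: hom_def)
    show "l 0 \<in> hom C L (Dom C f)" "l 1 \<in> hom C L (Dom C g)" using l0 l1 f g by (auto simp: hom_def)
    show "Cmp C f (l 0) = Cmp C g (l 1)" using c1 c2 by simp
    fix Q p' q' assume p': "p' \<in> hom C Q (Dom C f)" and q': "q' \<in> hom C Q (Dom C g)"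
      and e: "Cmp C f p' = Cmp C g q'"
    have p'': "p' \<in> hom C Q A" and q'': "q' \<in> hom C Q B" using p' q' f g by (auto simp: hom_def)
    define l' where "l' = (\<lambda>j::nat. if j = 0 then p' else if j = 1 then q' else Cmp C f p')"
    have fp: "Cmp C f p' \<in> hom C Q S" using comp[OF C p'' f] .
    have "is_cone JP C Do Da Q l'"
      unfolding is_cone_def JP_def Do_def Da_def l'_def using p'' q'' fp e hom_obj[OF C] idl[OF C]
      by auto
    then obtain h where h: "h \<in> hom C Q L" "\<forall>j\<in>Obj JP. Cmp C (l j) h = l' j"
      and u: "\<And>h'. h' \<in> hom C Q L \<and> (\<forall>j\<in>Obj JP. Cmp C (l j) h' = l' j) \<Longrightarrow> h' = h"
      using L unfolding is_limit_def by metis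
    show "\<exists>!h. h \<in> hom C Q L \<and> Cmp C (l 0) h = p' \<and> Cmp C (l 1) h = q'"
    proof (rule ex1I[of _ h])
      show "h \<in> hom C Q L \<and> Cmp C (l 0) h = p' \<and> Cmp C (l 1) h = q'"
        using h by (simp add: JP_def l'_def)
    next
      fix h' assume h': "h' \<in> hom C Q L \<and> Cmp C (l 0) h' = p' \<and> Cmp C (l 1) h' = q'"
      have "Cmp C (l 2) h' = Cmp C f p'"
        using h' c1 assoc[OF C _ l0 f, of h' Q] by auto
      then show "h' = h" using h' by (intro u) (auto simp: JP_def l'_def)
    qed
  qed
  then show ?thesis by blast
qed


lemma iso_inv: "iso C f \<Longrightarrow> f \<in> hom C a b \<Longrightarrow> \<exists>g\<in>hom C b a. Cmp C g f = Idm C a \<and> Cmp C f g = Idm C b"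
  unfolding iso_def hom_def by auto

lemma coprod_iso:
  assumes C: "is_category C" and Y: "is_coproduct C XL XR Y j1 j2" and g: "g \<in> hom C A XL"
    and f: "f \<in> hom C XL A" and fg: "Cmp C f g = Idm C A" and gf: "Cmp C g f = Idm C XL"
  shows "is_coproduct C A XR Y (Cmp C j1 g) j2"
  unfolding is_coproduct_def
proof (intro conjI allI impI)
  have j1: "j1 \<in> hom C XL Y" and j2: "j2 \<in> hom C XR Y" using coprod_inj[OF Y] by auto
  show "Cmp C j1 g \<in> hom C A Y" using comp[OF C g j1] .
  show "j2 \<in> hom C XR Y" using j2 .
  fix W u v assume u: "u \<in> hom C A W" and v: "v \<in> hom C XR W"
  have uf: "Cmp C u f \<in> hom C XL W" using comp[OF C f u] .
  obtain k where k: "k \<in> hom C Y W" "Cmp C k j1 = Cmp C u f" "Cmp C k j2 = v"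
    using coprod_ex[OF Y uf v] by blast
  show "\<exists>!k. k \<in> hom C Y W \<and> Cmp C k (Cmp C j1 g) = u \<and> Cmp C k j2 = v"
  proof (rule ex1I[of _ k])
    show "k \<in> hom C Y W \<and> Cmp C k (Cmp C j1 g) = u \<and> Cmp C k j2 = v"
      using k assoc[OF C g j1 k(1)] assoc[OF C g f u] fg idr[OF C u] by simp
  next
    fix k' assume k': "k' \<in> hom C Y W \<and> Cmp C k' (Cmp C j1 g) = u \<and> Cmp C k' j2 = v"
    have "Cmp C k' j1 = Cmp C u f"
      using k' assoc[OF C g j1, of k' W] assoc[OF C f g comp[OF C j1, of k' W]] gf
        idr[OF C comp[OF C j1, of k' W]] by auto
    then show "k' = k" using coprod_uniq[OF C Y, of k' W k] k k' by simp
  qed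
qed

theorem proposition5:
  fixes C :: "('o, 'm) cat" and c :: 'm
  assumes "is_category C"
    and "bicomplete C"
    and "splitting_coproducts C"
    and "disjoint_coproducts C"
    and "core_cofibration C c"
  shows "\<exists>X S i1 i2 \<phi>. is_coproduct C (Dom C c) X S i1 i2 \<and>
           \<phi> \<in> hom C (Cod C c) S \<and> iso C \<phi> \<and> Cmp C \<phi> c = i1"
proof -
  note C = assms(1) and bc = assms(2) and sp = assms(3) and dj = assms(4) and cof = assms(5)
  define A where "A = Dom C c"
  define B where "B = Cod C c"
  have c: "c \<in> hom C A B" using cof unfolding core_cofibration_def A_def B_def hom_def by auto
  have AB: "A \<in> Obj C" "B \<in> Obj C" using hom_obj[OF C c] by auto
  have idB: "Idm C B \<in> hom C B B" using idm[OF C AB(2)] .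
  obtain S0 i1 i2 where S0: "is_coproduct C A B S0 i1 i2" using coproduct_exists[OF C bc AB] by blast
  have i1: "i1 \<in> hom C A S0" and i2: "i2 \<in> hom C B S0" using coprod_inj[OF S0] by auto
  obtain r where r: "r \<in> hom C S0 B" "Cmp C r i1 = c" "Cmp C r i2 = Idm C B"
    using coprod_ex[OF S0 c idB] by blast
  have "retraction C r" unfolding retraction_def using r i2 by (auto simp: hom_def)
  then have "llp C c r" using cof unfolding core_cofibration_def by blast
  moreover have "Cmp C r i1 = Cmp C (Idm C B) c" using r idl[OF C c] by simp
  moreover have dc: "Dom C c = A" "Cod C c = B" "Dom C r = S0" "Cod C r = B"
    using c r by (auto simp: hom_def)
  ultimately have "\<exists>h\<in>hom C B S0. Cmp C h c = i1 \<and> Cmp C r h = Idm C B"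
    unfolding llp_def dc using i1 idB by blast
  then obtain h where h: "h \<in> hom C B S0" "Cmp C h c = i1" "Cmp C r h = Idm C B"
    by blast
  have mi1: "monic C i1" and mi2: "monic C i2" using dj S0 unfolding disjoint_coproducts_def by blast+
  have pbinit: "\<And>P p q. is_pullback C i1 i2 P p q \<Longrightarrow> initial C P"
    using dj S0 unfolding disjoint_coproducts_def by blast
  have cmono: "\<And>x y Z. x \<in> hom C Z A \<Longrightarrow> y \<in> hom C Z A \<Longrightarrow> Cmp C c x = Cmp C c y \<Longrightarrow> x = y"
  proof -
    fix x y Z assume x: "x \<in> hom C Z A" and y: "y \<in> hom C Z A" and e: "Cmp C c x = Cmp C c y"
    have "Cmp C i1 x = Cmp C i1 y"
      using e h(2) assoc[OF C x c h(1)] assoc[OF C y c h(1)] by metis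
    then show "x = y" using monicD[OF mi1 i1 x y] by blast
  qed
  obtain XL XR fL fR Y j1 j2 \<theta> where fL: "fL \<in> hom C XL A" and fR: "fR \<in> hom C XR B"
    and Y: "is_coproduct C XL XR Y j1 j2" and th: "\<theta> \<in> hom C Y B" "iso C \<theta>"
    and e1: "Cmp C (Cmp C h \<theta>) j1 = Cmp C i1 fL" and e2: "Cmp C (Cmp C h \<theta>) j2 = Cmp C i2 fR"
    using sp[unfolded splitting_coproducts_def, rule_format, OF S0 h(1)] by blast
  have j1: "j1 \<in> hom C XL Y" and j2: "j2 \<in> hom C XR Y" using coprod_inj[OF Y] by auto
  have mj1: "monic C j1" using dj Y unfolding disjoint_coproducts_def by blast
  have hth: "Cmp C h \<theta> \<in> hom C Y S0" using comp[OF C th(1) h(1)] .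
  have thj1: "Cmp C \<theta> j1 = Cmp C c fL"
  proof -
    have "Cmp C \<theta> j1 = Cmp C (Idm C B) (Cmp C \<theta> j1)" using idl[OF C comp[OF C j1 th(1)]] by simp
    also have "\<dots> = Cmp C r (Cmp C h (Cmp C \<theta> j1))"
      using h(3) assoc[OF C comp[OF C j1 th(1)] h(1) r(1)] by simp
    also have "\<dots> = Cmp C r (Cmp C i1 fL)" using e1 assoc[OF C j1 th(1) h(1)] by simp
    also have "\<dots> = Cmp C c fL" using r(2) assoc[OF C fL i1 r(1)] by simp
    finally show ?thesis .
  qed
  have thj2: "Cmp C \<theta> j2 = fR"
  proof -
    have "Cmp C \<theta> j2 = Cmp C (Idm C B) (Cmp C \<theta> j2)" using idl[OF C comp[OF C j2 th(1)]] by simp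
    also have "\<dots> = Cmp C r (Cmp C h (Cmp C \<theta> j2))"
      using h(3) assoc[OF C comp[OF C j2 th(1)] h(1) r(1)] by simp
    also have "\<dots> = Cmp C r (Cmp C i2 fR)" using e2 assoc[OF C j2 th(1) h(1)] by simp
    also have "\<dots> = fR" using r(3) assoc[OF C fR i2 r(1)] idl[OF C fR] by simp
    finally show ?thesis .
  qed
  obtain th' where th': "th' \<in> hom C B Y" "Cmp C th' \<theta> = Idm C Y" "Cmp C \<theta> th' = Idm C B"
    using iso_inv[OF th(2) th(1)] by blast
  define d where "d = Cmp C th' c"
  have d: "d \<in> hom C A Y" unfolding d_def using comp[OF C c th'(1)] .
  have thd: "Cmp C \<theta> d = c" unfolding d_def using assoc[OF C c th'(1) th(1)] th'(3) idl[OF C c] by simp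
  obtain AL AR gL gR Z k1 k2 \<psi> where gL: "gL \<in> hom C AL XL" and gR: "gR \<in> hom C AR XR"
    and Z: "is_coproduct C AL AR Z k1 k2" and ps: "\<psi> \<in> hom C Z A" "iso C \<psi>"
    and e3: "Cmp C (Cmp C d \<psi>) k1 = Cmp C j1 gL" and e4: "Cmp C (Cmp C d \<psi>) k2 = Cmp C j2 gR"
    using sp[unfolded splitting_coproducts_def, rule_format, OF Y d] by blast
  have k1: "k1 \<in> hom C AL Z" and k2: "k2 \<in> hom C AR Z" using coprod_inj[OF Z] by auto
  have psk2: "Cmp C \<psi> k2 \<in> hom C AR A" using comp[OF C k2 ps(1)] .
  have fg: "Cmp C fR gR \<in> hom C AR B" using comp[OF C gR fR] .
  obtain P p q where P: "is_pullback C i1 i2 P p q" using pullback_exists[OF C bc i1 i2] by blast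
  have Pi: "initial C P" using pbinit[OF P] .
  have p: "p \<in> hom C P A" and q: "q \<in> hom C P B" using P i1 i2 unfolding is_pullback_def hom_def by auto
  have cd: "Cmp C c (Cmp C \<psi> k2) = Cmp C fR gR"
  proof -
    have "Cmp C c (Cmp C \<psi> k2) = Cmp C \<theta> (Cmp C d (Cmp C \<psi> k2))"
      using thd assoc[OF C psk2 d th(1)] by simp
    also have "\<dots> = Cmp C \<theta> (Cmp C j2 gR)" using e4 assoc[OF C k2 ps(1) d] by simp
    also have "\<dots> = Cmp C fR gR" using thj2 assoc[OF C gR j2 th(1)] by simp
    finally show ?thesis .
  qed
  have cone: "Cmp C i1 (Cmp C \<psi> k2) = Cmp C i2 (Cmp C fR gR)"
  proof -
    have "Cmp C i1 (Cmp C \<psi> k2) = Cmp C h (Cmp C c (Cmp C \<psi> k2))"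
      using h(2) assoc[OF C psk2 c h(1)] by simp
    also have "\<dots> = Cmp C h (Cmp C (Cmp C \<theta> j2) gR)" using cd thj2 by simp
    also have "\<dots> = Cmp C (Cmp C (Cmp C h \<theta>) j2) gR"
      using assoc[OF C gR j2 th(1)] assoc[OF C gR comp[OF C j2 th(1)] h(1)] assoc[OF C j2 th(1) h(1)] by simp
    also have "\<dots> = Cmp C i2 (Cmp C fR gR)" using e2 assoc[OF C gR fR i2] by simp
    finally show ?thesis .
  qed
  have di: "Dom C i1 = A" "Dom C i2 = B" using i1 i2 by (auto simp: hom_def)
  have pu: "\<forall>Q p' q'. p' \<in> hom C Q A \<longrightarrow> q' \<in> hom C Q B \<longrightarrow> Cmp C i1 p' = Cmp C i2 q' \<longrightarrow>
        (\<exists>!h. h \<in> hom C Q P \<and> Cmp C p h = p' \<and> Cmp C q h = q')"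
    using P unfolding is_pullback_def di by blast
  obtain t where t: "t \<in> hom C AR P" "Cmp C p t = Cmp C \<psi> k2" "Cmp C q t = Cmp C fR gR"
    using pu[rule_format, OF psk2 fg cone] by blast
  have XLo: "XL \<in> Obj C" using hom_obj[OF C fL] by simp
  obtain e where e: "e \<in> hom C P XL" using initial_ex[OF C Pi XLo] by blast
  have dpk: "Cmp C d (Cmp C \<psi> k2) = Cmp C (Cmp C j1 e) t"
  proof -
    have "Cmp C d p = Cmp C j1 e"
      using initial_uniq[OF C Pi comp[OF C p d] comp[OF C e j1]] .
    then show ?thesis using t(2) assoc[OF C t(1) p d] by simp
  qed
  have et: "Cmp C e t \<in> hom C AR XL" using comp[OF C t(1) e] .
  obtain g' where g': "g' \<in> hom C Z XL" "Cmp C g' k1 = gL" "Cmp C g' k2 = Cmp C e t"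
    using coprod_ex[OF Z gL et] by blast
  have dps: "Cmp C d \<psi> \<in> hom C Z Y" using comp[OF C ps(1) d] .
  have jg': "Cmp C j1 g' = Cmp C d \<psi>"
  proof (rule coprod_uniq[OF C Z comp[OF C g'(1) j1] dps])
    show "Cmp C (Cmp C j1 g') k1 = Cmp C (Cmp C d \<psi>) k1"
      using e3 g'(2) assoc[OF C k1 g'(1) j1] by simp
    show "Cmp C (Cmp C j1 g') k2 = Cmp C (Cmp C d \<psi>) k2"
      using g'(3) assoc[OF C k2 g'(1) j1] assoc[OF C t(1) e j1] dpk assoc[OF C k2 ps(1) d] by simp
  qed
  obtain ps' where ps': "ps' \<in> hom C A Z" "Cmp C ps' \<psi> = Idm C Z" "Cmp C \<psi> ps' = Idm C A"
    using iso_inv[OF ps(2) ps(1)] by blast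
  define g where "g = Cmp C g' ps'"
  have g: "g \<in> hom C A XL" unfolding g_def using comp[OF C ps'(1) g'(1)] .
  have j1g: "Cmp C j1 g = d"
    unfolding g_def using assoc[OF C ps'(1) g'(1) j1] jg' assoc[OF C ps'(1) ps(1) d] ps'(3) idr[OF C d]
    by simp
  have thj1g: "Cmp C \<theta> (Cmp C j1 g) = c" using j1g thd by simp
  have fLg: "Cmp C fL g = Idm C A"
  proof (rule cmono[OF comp[OF C g fL] idm[OF C AB(1)]])
    show "Cmp C c (Cmp C fL g) = Cmp C c (Idm C A)"
      using assoc[OF C g fL c] thj1 assoc[OF C g j1 th(1)] thj1g idr[OF C c] by simp
  qed
  have gfL: "Cmp C g fL = Idm C XL"
  proof -
    have XLid: "Idm C XL \<in> hom C XL XL" using idm[OF C XLo] .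
    have gf: "Cmp C g fL \<in> hom C XL XL" using comp[OF C fL g] .
    have "Cmp C \<theta> (Cmp C j1 (Cmp C g fL)) = Cmp C \<theta> (Cmp C j1 (Idm C XL))"
      using assoc[OF C fL g j1] assoc[OF C fL comp[OF C g j1] th(1)] thj1g thj1 idr[OF C j1] by simp
    then have "Cmp C th' (Cmp C \<theta> (Cmp C j1 (Cmp C g fL))) = Cmp C th' (Cmp C \<theta> (Cmp C j1 (Idm C XL)))"
      by simp
    then have "Cmp C j1 (Cmp C g fL) = Cmp C j1 (Idm C XL)"
      using assoc[OF C comp[OF C gf j1] th(1) th'(1)] assoc[OF C comp[OF C XLid j1] th(1) th'(1)]
        th'(2) idl[OF C comp[OF C gf j1]] idl[OF C comp[OF C XLid j1]] by simp
    then show ?thesis using monicD[OF mj1 j1 gf XLid] by blast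
  qed
  have cop: "is_coproduct C A XR Y (Cmp C j1 g) j2"
    using coprod_iso[OF C Y g fL fLg gfL] .
  have isoth': "iso C th'"
    unfolding iso_def using th' th(1) by (auto simp: hom_def)
  have "is_coproduct C A XR Y (Cmp C j1 g) j2 \<and> th' \<in> hom C B Y \<and> iso C th' \<and> Cmp C th' c = Cmp C j1 g"
    using cop th'(1) isoth' j1g d_def by simp
  then show ?thesis unfolding A_def B_def by blast
qed

end
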